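(* Let $n \ge 2$. The minimum length of a solution to the $(n-1)$-out-of-$n$ picture-hanging puzzle on the nails $\{1,\dots,n\}$ is exactly $2n$, and this minimum is attained by the word \[ 1 + 2 + \cdots + n - 1 - 2 - \cdots - n. \]
   Context: Words are elements of the free group $F(V)$ on a finite set $V$ of generators ("nails"), written additively: $+$ is the (non-commutative) group operation, $-x$ the inverse, $0$ the identity (empty word); so $1+2+\cdots+n-1-2-\cdots-n$ denotes $x_1x_2\cdots x_n x_1^{-1}x_2^{-1}\cdots x_n^{-1}$. The length of an element is the number of letters (generators with sign) in its freely reduced word. For $S \subseteq V$, $w|_S$ denotes the image of $w$ under the homomorphism sending each generator in $S$ to $0$ and fixing the others. For $0 \le k \le n$ and $V=\{1,\dots,n\}$, a solution to the $k$-out-of-$n$ picture-hanging puzzle is a word $w \in F(V)$ such that for every $S \subseteq V$: $w|_S = 0$ if and only if $|S| \ge k$. *)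

theory Defs
  imports Main
begin

text \<open>Free group F(V) on generators of type nat. A letter is a generator with a sign
  (True = positive, False = inverse). Group elements are represented by freely reduced words.\<close>

type_synonym letter = "nat \<times> bool"
type_synonym word = "letter list"

definition inv_letter :: "letter \<Rightarrow> letter" where
  "inv_letter x = (fst x, \<not> snd x)"

fun reduced :: "word \<Rightarrow> bool" where
  "reduced [] = True"
| "reduced [x] = True"
| "reduced (x # y # ys) = (y \<noteq> inv_letter x \<and> reduced (y # ys))"

fun freduce :: "word \<Rightarrow> word" where
  "freduce [] = []"
| "freduce (x # xs) =
     (case freduce xs of
        [] \<Rightarrow> [x]
      | y # ys \<Rightarrow> (if y = inv_letter x then ys else x # y # ys))"

text \<open>w|_S: image under the homomorphism killing the generators in S (as a reduced word).\<close>
definition restrict_word :: "word \<Rightarrow> nat set \<Rightarrow> word" where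
  "restrict_word w S = freduce (filter (\<lambda>x. fst x \<notin> S) w)"

definition puzzle_solution :: "nat \<Rightarrow> nat \<Rightarrow> word \<Rightarrow> bool" where
  "puzzle_solution k n w \<longleftrightarrow>
     reduced w \<and> (\<forall>x \<in> set w. fst x \<in> {1..n}) \<and>
     (\<forall>S. S \<subseteq> {1..n} \<longrightarrow> (restrict_word w S = [] \<longleftrightarrow> card S \<ge> k))"

definition commutator_word :: "nat \<Rightarrow> word" where
  "commutator_word n = map (\<lambda>i. (i, True)) [1..<n+1] @ map (\<lambda>i. (i, False)) [1..<n+1]"

end

theory Submission
  imports Defs
begin

lemma freduce_reduced: "reduced w \<Longrightarrow> freduce w = w"
proof (induction w)
  case Nil then show ?case by simp
next
  case (Cons x xs)
  show ?case
  proof (cases xs)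
    case Nil then show ?thesis by simp
  next
    case (Cons y ys)
    with Cons.prems Cons.IH show ?thesis by simp
  qed
qed

lemma reduced_map_same: "reduced (map (\<lambda>i. (i, b)) L)"
proof (induction L)
  case Nil then show ?case by simp
next
  case (Cons a L) then show ?case by (cases L) (auto simp: inv_letter_def)
qed

lemma reduced_append:
  "reduced xs \<Longrightarrow> reduced (y # ys) \<Longrightarrow> (xs \<noteq> [] \<longrightarrow> y \<noteq> inv_letter (last xs))
   \<Longrightarrow> reduced (xs @ y # ys)"
proof (induction xs rule: reduced.induct)
  case 1 then show ?case by simp
next
  case (2 x) then show ?case by simp
next
  case (3 x z zs) then show ?case by simp
qed

lemma hd_last_distinct: "distinct L \<Longrightarrow> length L \<ge> 2 \<Longrightarrow> hd L \<noteq> last L"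
proof -
  assume d: "distinct L" and l: "length L \<ge> 2"
  then obtain a b rest where L: "L = a # b # rest"
    by (metis One_nat_def Suc_1 Suc_le_length_iff)
  have "last L \<in> set (b # rest)" using L by simp
  then show ?thesis using d L by auto
qed

lemma sum_count_le:
  "(\<Sum>i\<in>A. length (filter (\<lambda>x. fst x = i) w)) \<le> length w" if "finite A"
proof (induction w)
  case Nil then show ?case by simp
next
  case (Cons x w)
  have "(\<Sum>i\<in>A. length (filter (\<lambda>x. fst x = i) (x # w)))
      = (\<Sum>i\<in>A. (if fst x = i then 1 else 0) + length (filter (\<lambda>x. fst x = i) w))"
    by (rule sum.cong) auto
  also have "\<dots> = (\<Sum>i\<in>A. (if fst x = i then 1 else 0)) + (\<Sum>i\<in>A. length (filter (\<lambda>x. fst x = i) w))"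
    by (rule sum.distrib)
  also have "(\<Sum>i\<in>A. (if fst x = i then 1 else 0::nat)) \<le> 1"
    using that by (simp add: sum.delta)
  finally show ?case using Cons by simp
qed

lemma lower_bound:
  assumes n: "n \<ge> 2" and sol: "puzzle_solution (n - 1) n w"
  shows "length w \<ge> 2 * n"
proof -
  have inV: "\<forall>x\<in>set w. fst x \<in> {1..n}"
    and R: "\<And>S. S \<subseteq> {1..n} \<Longrightarrow> (restrict_word w S = [] \<longleftrightarrow> card S \<ge> n - 1)"
    using sol unfolding puzzle_solution_def by auto
  have each: "length (filter (\<lambda>x. fst x = i) w) \<ge> 2" if i: "i \<in> {1..n}" for i
  proof (rule ccontr)
    assume "\<not> ?thesis"
    then have "length (filter (\<lambda>x. fst x = i) w) = 0 \<or> length (filter (\<lambda>x. fst x = i) w) = 1"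
      by linarith
    then show False
    proof
      assume z: "length (filter (\<lambda>x. fst x = i) w) = 0"
      obtain j where j: "j \<in> {1..n}" "j \<noteq> i"
      proof (cases "i = 1")
        case True then show ?thesis using that[of 2] n by auto
      next
        case False then show ?thesis using that[of 1] n by auto
      qed
      define S where "S = {1..n} - {i, j}"
      have cS: "card S = n - 2" unfolding S_def using i j by (simp add: card_Diff_subset)
      have cS2: "card (S \<union> {i}) = n - 1" unfolding S_def using i j
        by (metis Diff_insert Diff_insert_absorb Un_insert_right card_Diff_singleton
            finite_atLeastAtMost insert_Diff insert_iff sup_bot.right_neutral
            card_atLeastAtMost diff_Suc_1 diff_diff_left Suc_1 plus_1_eq_Suc)
      have noi: "\<forall>x\<in>set w. fst x \<noteq> i" using z by (simp add: filter_empty_conv)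
      have "filter (\<lambda>x. fst x \<notin> S) w = filter (\<lambda>x. fst x \<notin> S \<union> {i}) w"
        using noi by (intro filter_cong) auto
      then have "restrict_word w S = restrict_word w (S \<union> {i})"
        unfolding restrict_word_def by simp
      also have "\<dots> = []" using R[of "S \<union> {i}"] cS2 i unfolding S_def by auto
      finally have "restrict_word w S = []" .
      then have "card S \<ge> n - 1" using R[of S] unfolding S_def by auto
      then show False using cS n by simp
    next
      assume o: "length (filter (\<lambda>x. fst x = i) w) = 1"
      define S where "S = {1..n} - {i}"
      have cS: "card S = n - 1" unfolding S_def using i by simp
      have "filter (\<lambda>x. fst x \<notin> S) w = filter (\<lambda>x. fst x = i) w"
        using inV unfolding S_def by (intro filter_cong) auto
      moreover obtain y where "filter (\<lambda>x. fst x = i) w = [y]"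
        using o by (metis One_nat_def length_0_conv length_Suc_conv)
      ultimately have "restrict_word w S = [y]" unfolding restrict_word_def by simp
      then show False using R[of S] cS unfolding S_def by auto
    qed
  qed
  have "2 * n = (\<Sum>i\<in>{1..n}. (2::nat))" by simp
  also have "\<dots> \<le> (\<Sum>i\<in>{1..n}. length (filter (\<lambda>x. fst x = i) w))"
    by (rule sum_mono) (use each in auto)
  also have "\<dots> \<le> length w" by (rule sum_count_le) simp
  finally show ?thesis .
qed

lemma comm_restrict:
  "filter (\<lambda>x. fst x \<notin> S) (commutator_word n)
   = map (\<lambda>i. (i, True)) (filter (\<lambda>i. i \<notin> S) [1..<n+1]) @ map (\<lambda>i. (i, False)) (filter (\<lambda>i. i \<notin> S) [1..<n+1])"
  unfolding commutator_word_def by (simp add: filter_map comp_def)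

lemma reduced_comm_gen:
  assumes "distinct L" "length L \<ge> 2"
  shows "reduced (map (\<lambda>i. (i, True)) L @ map (\<lambda>i. (i, False)) L)"
proof -
  obtain a rest where L: "L = a # rest" using assms by (cases L) auto
  have hl: "hd L \<noteq> last L" using hd_last_distinct assms by blast
  have "L \<noteq> []" using L by simp
  then have "last (map (\<lambda>i. (i, True)) L) = (last L, True)" by (simp add: last_map)
  moreover have "reduced ((a, False) # map (\<lambda>i. (i, False)) rest)"
    using reduced_map_same[of False "a # rest"] by simp
  moreover have "(a, False) \<noteq> inv_letter (last L, True)"
    using hl L by (simp add: inv_letter_def)
  ultimately have "reduced (map (\<lambda>i. (i, True)) L @ (a, False) # map (\<lambda>i. (i, False)) rest)"
    using reduced_append[of "map (\<lambda>i. (i, True)) L" "(a, False)" "map (\<lambda>i. (i, False)) rest"]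
      reduced_map_same[of True L] by simp
  then show ?thesis using L by simp
qed

lemma len_L: "S \<subseteq> {1..n} \<Longrightarrow> length (filter (\<lambda>i. i \<notin> S) [1..<n+1]) = n - card S"
proof -
  assume S: "S \<subseteq> {1..n}"
  have "length (filter (\<lambda>i. i \<notin> S) [1..<n+1]) = card ({x. x \<notin> S} \<inter> set [1..<n+1])"
    by (rule distinct_length_filter) simp
  also have "{x. x \<notin> S} \<inter> set [1..<n+1] = {1..n} - S" by auto
  also have "card \<dots> = n - card S" using S by (simp add: card_Diff_subset finite_subset)
  finally show ?thesis .
qed

lemma comm_solution:
  assumes n: "n \<ge> 2"
  shows "puzzle_solution (n - 1) n (commutator_word n)"
  unfolding puzzle_solution_def
proof (intro conjI allI impI)
  show "reduced (commutator_word n)"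
    unfolding commutator_word_def
    by (rule reduced_comm_gen) (use n in auto)
  show "\<forall>x\<in>set (commutator_word n). fst x \<in> {1..n}"
    unfolding commutator_word_def by auto
  fix S :: "nat set" assume S: "S \<subseteq> {1..n}"
  define L where "L = filter (\<lambda>i. i \<notin> S) [1..<n+1]"
  have lenL: "length L = n - card S" unfolding L_def using len_L[OF S] .
  have dL: "distinct L" unfolding L_def by simp
  have cle: "card S \<le> n" using S card_mono[OF _ S] by simp
  have rw: "restrict_word (commutator_word n) S
      = freduce (map (\<lambda>i. (i, True)) L @ map (\<lambda>i. (i, False)) L)"
    unfolding restrict_word_def comm_restrict L_def ..
  show "(restrict_word (commutator_word n) S = []) = (n - 1 \<le> card S)"
  proof (cases "length L \<ge> 2")
    case True
    then have "restrict_word (commutator_word n) S = map (\<lambda>i. (i, True)) L @ map (\<lambda>i. (i, False)) L"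
      using rw freduce_reduced reduced_comm_gen[OF dL] by simp
    moreover have "L \<noteq> []" using True by auto
    ultimately show ?thesis using True lenL by auto
  next
    case False
    then have "L = [] \<or> (\<exists>a. L = [a])"
      by (cases L; cases "tl L") auto
    then have "restrict_word (commutator_word n) S = []"
      using rw by (auto simp: inv_letter_def)
    then show ?thesis using False lenL cle by auto
  qed
qed

theorem proposition2:
  fixes n :: nat
  assumes "n \<ge> 2"
  shows "(\<forall>w. puzzle_solution (n - 1) n w \<longrightarrow> length w \<ge> 2 * n)
       \<and> puzzle_solution (n - 1) n (commutator_word n)
       \<and> length (commutator_word n) = 2 * n"
  using lower_bound[OF assms] comm_solution[OF assms]
  by (auto simp: commutator_word_def)

end
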